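(* Consider the online resource allocation model with samples described in the context, where $r_1,r_2$ are unknown to the decision-maker. Consider the algorithm that, with probability $1/2$, accepts only type 1 agents (each arriving type 1 agent is accepted while resource remains, all type 2 agents rejected), and with probability $1/2$ accepts only type 2 agents. For $p=O(1/\sqrt m)$ and any $m>0$, the competitive ratio of this algorithm is $1/2$.
   Context: Model: a decision-maker has $m$ units of a divisible resource to allocate to unit-demand agents of two types; an accepted type-$i$ agent ($i\in\{1,2\}$) yields a reward in $\{0,1\}$ with mean $r_i\in(0,1)$, $r_1>r_2$. An adversary chooses integers $h,\ell\ge0$. Each agent is independently sampled with probability $p$; $s_1\sim\mathrm{Bin}(h,p)$, $s_2\sim\mathrm{Bin}(\ell,p)$; $\psi$ is the sample information. The remaining $n_1=h-s_1$ type 1 and $n_2=\ell-s_2$ type 2 agents arrive online in an adversarial order $I$; on each arrival the decision-maker irrevocably accepts (possibly fractionally) or rejects, total allocation at most $m$. $\mathrm{OPT}(I)=r_1\min\{n_1,m\}+r_2\min\{n_2,(m-n_1)^+\}$. The competitive ratio of an algorithm $A$ is $\inf_{(h,\ell)}\mathbb E_\psi[\inf_I\mathbb E[\mathrm{REW}_A(I,\psi)]/\mathrm{OPT}(I)]$, $\mathrm{REW}_A$ being its cumulative expected reward and the inner expectation over its randomness. *)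

theory Defs
  imports "HOL-Probability.Probability"
begin

text \<open>Agent types are encoded as the natural numbers 1 and 2. An arrival order
  is a list of types.\<close>

definition type_reward :: "real \<Rightarrow> real \<Rightarrow> nat \<Rightarrow> real" where
  "type_reward r1 r2 t = (if t = 1 then r1 else r2)"

definition OPT :: "real \<Rightarrow> real \<Rightarrow> real \<Rightarrow> nat \<Rightarrow> nat \<Rightarrow> real" where
  "OPT m r1 r2 n1 n2 = r1 * min (real n1) m + r2 * min (real n2) (max (m - real n1) 0)"

definition orders :: "nat \<Rightarrow> nat \<Rightarrow> nat list set" where
  "orders n1 n2 = {I. set I \<subseteq> {1, 2} \<and> count_list I 1 = n1 \<and> count_list I 2 = n2}"

fun greedy_only :: "nat \<Rightarrow> real \<Rightarrow> real \<Rightarrow> real \<Rightarrow> nat list \<Rightarrow> real" where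
  "greedy_only i r1 r2 c [] = 0"
| "greedy_only i r1 r2 c (t # ts) =
     (if t = i then
        type_reward r1 r2 t * min 1 (max c 0) + greedy_only i r1 r2 (c - min 1 (max c 0)) ts
      else greedy_only i r1 r2 c ts)"

text \<open>The randomized algorithm of the theorem: with probability 1/2 accept only
  type 1, with probability 1/2 accept only type 2. Its expected reward does not
  use the sample information (s1, s2) nor r1, r2 for its decisions.\<close>
definition half_half_rew :: "real \<Rightarrow> real \<Rightarrow> real \<Rightarrow> nat \<Rightarrow> nat \<Rightarrow> nat list \<Rightarrow> real" where
  "half_half_rew m r1 r2 s1 s2 I = 1/2 * greedy_only 1 r1 r2 m I + 1/2 * greedy_only 2 r1 r2 m I"

text \<open>Ratio ALG/OPT, with the convention 0/0 = 1 (when OPT = 0 every algorithm is optimal).\<close>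
definition ratio :: "real \<Rightarrow> real \<Rightarrow> real" where
  "ratio a b = (if b = 0 then 1 else a / b)"

text \<open>Competitive ratio of an algorithm, given by its expected reward
  REW s1 s2 I as a function of the sample information (s1, s2) and the order I.\<close>
definition competitive_ratio ::
  "real \<Rightarrow> real \<Rightarrow> real \<Rightarrow> real \<Rightarrow> (nat \<Rightarrow> nat \<Rightarrow> nat list \<Rightarrow> real) \<Rightarrow> real" where
  "competitive_ratio m r1 r2 p REW =
     (INF hl \<in> (UNIV :: (nat \<times> nat) set).
        measure_pmf.expectation (pair_pmf (binomial_pmf (fst hl) p) (binomial_pmf (snd hl) p))
          (\<lambda>(s1, s2). INF I \<in> orders (fst hl - s1) (snd hl - s2).
              ratio (REW s1 s2 I) (OPT m r1 r2 (fst hl - s1) (snd hl - s2))))"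

end

theory Submission
  imports Defs
begin

lemma greedy_only_eq:
  assumes "c \<ge> 0"
  shows "greedy_only i r1 r2 c I = type_reward r1 r2 i * min (real (count_list I i)) c"
  using assms
proof (induction I arbitrary: c)
  case Nil
  then show ?case by simp
next
  case (Cons t ts)
  show ?case
  proof (cases "t = i")
    case True
    have c': "c - min 1 (max c 0) \<ge> 0" using Cons.prems by auto
    have "min 1 c + min (real (count_list ts i)) (c - min 1 c) = min (real (count_list ts i) + 1) c"
      using Cons.prems by (auto simp: min_def)
    moreover have "max c 0 = c" using Cons.prems by simp
    ultimately show ?thesis using True Cons.IH[OF c']
      by (simp add: distrib_left[symmetric] add.commute)
  next
    case False
    then show ?thesis using Cons by simp
  qed
qed

definition fr :: "real \<Rightarrow> real \<Rightarrow> real \<Rightarrow> nat \<Rightarrow> nat \<Rightarrow> real" where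
  "fr m r1 r2 n1 n2 = ratio (1/2 * (r1 * min (real n1) m + r2 * min (real n2) m)) (OPT m r1 r2 n1 n2)"

lemma count_rep: "count_list (replicate n x) x = n"
  by (induction n) auto

lemma inner_eq:
  assumes "m > 0"
  shows "(INF I \<in> orders n1 n2. ratio (half_half_rew m r1 r2 s1 s2 I) (OPT m r1 r2 n1 n2))
      = fr m r1 r2 n1 n2"
proof -
  have ne: "replicate n1 1 @ replicate n2 2 \<in> orders n1 n2"
    by (auto simp: orders_def count_list_append count_rep)
  have "\<forall>I \<in> orders n1 n2. ratio (half_half_rew m r1 r2 s1 s2 I) (OPT m r1 r2 n1 n2) = fr m r1 r2 n1 n2"
    using assms by (auto simp: orders_def half_half_rew_def fr_def greedy_only_eq type_reward_def add_divide_distrib)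
  then have "(INF I \<in> orders n1 n2. ratio (half_half_rew m r1 r2 s1 s2 I) (OPT m r1 r2 n1 n2))
     = (INF I \<in> orders n1 n2. fr m r1 r2 n1 n2)" by (auto intro!: INF_cong)
  also have "\<dots> = fr m r1 r2 n1 n2" using ne by (intro cINF_const) blast
  finally show ?thesis .
qed

lemma fr_ge:
  assumes "m > 0" "0 < r2" "r2 < r1"
  shows "fr m r1 r2 n1 n2 \<ge> 1/2"
proof (cases "OPT m r1 r2 n1 n2 = 0")
  case True
  then show ?thesis by (simp add: fr_def ratio_def)
next
  case False
  have o0: "OPT m r1 r2 n1 n2 \<ge> 0" using assms by (auto simp: OPT_def)
  hence opos: "OPT m r1 r2 n1 n2 > 0" using False by linarith
  have "min (real n2) (max (m - real n1) 0) \<le> min (real n2) m" using assms by auto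
  hence "OPT m r1 r2 n1 n2 \<le> r1 * min (real n1) m + r2 * min (real n2) m"
    using assms unfolding OPT_def by (simp add: mult_left_mono)
  then show ?thesis using opos by (simp add: fr_def ratio_def False field_simps)
qed

lemma fr_n2_0:
  assumes "m > 0" "0 < r2" "r2 < r1"
  shows "fr m r1 r2 n1 0 = (if n1 = 0 then 1 else 1/2)"
proof -
  show ?thesis
  proof (cases "n1 = 0")
    case True then show ?thesis using assms by (simp add: fr_def ratio_def OPT_def)
  next
    case False
    hence "r1 * min (real n1) m > 0" using assms by simp
    then show ?thesis using False assms by (simp add: fr_def ratio_def OPT_def)
  qed
qed

lemma exp_k:
  assumes "m > 0" "0 < r2" "r2 < r1" "0 \<le> p" "p < 1"
  shows "measure_pmf.expectation (pair_pmf (binomial_pmf k p) (binomial_pmf 0 p))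
          (\<lambda>(s1, s2). fr m r1 r2 (k - s1) (0 - s2)) = 1/2 + 1/2 * p ^ k"
proof -
  have b0: "binomial_pmf 0 p = return_pmf 0" using assms by (intro binomial_pmf_0) auto
  have sub: "set_pmf (binomial_pmf k p) \<subseteq> {..k}"
    using assms by (auto simp: set_pmf_binomial_eq)
  let ?g = "\<lambda>s::nat. if k - s = 0 then 1 else 1/2 :: real"
  have "measure_pmf.expectation (pair_pmf (binomial_pmf k p) (binomial_pmf 0 p))
          (\<lambda>(s1, s2). fr m r1 r2 (k - s1) (0 - s2))
        = measure_pmf.expectation (binomial_pmf k p) ?g"
    using assms by (simp add: b0 pair_return_pmf2 fr_n2_0)
  also have "\<dots> = (\<Sum>a\<in>{..k}. ?g a * pmf (binomial_pmf k p) a)"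
    using sub by (intro integral_measure_pmf_real) auto
  also have "\<dots> = (\<Sum>a\<in>{..k}. 1/2 * pmf (binomial_pmf k p) a) + 1/2 * pmf (binomial_pmf k p) k"
  proof -
    have "(\<Sum>a\<in>{..k}. ?g a * pmf (binomial_pmf k p) a)
       = (\<Sum>a\<in>{..k}. 1/2 * pmf (binomial_pmf k p) a + (if a = k then 1/2 * pmf (binomial_pmf k p) a else 0))"
      by (intro sum.cong) auto
    also have "\<dots> = (\<Sum>a\<in>{..k}. 1/2 * pmf (binomial_pmf k p) a) + 1/2 * pmf (binomial_pmf k p) k"
      by (simp add: sum.distrib)
    finally show ?thesis .
  qed
  also have "(\<Sum>a\<in>{..k}. pmf (binomial_pmf k p) a) = 1"
  proof -
    have "measure_pmf.expectation (binomial_pmf k p) (\<lambda>_. 1::real) = (\<Sum>a\<in>{..k}. 1 * pmf (binomial_pmf k p) a)"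
      using sub by (intro integral_measure_pmf_real) auto
    then show ?thesis by simp
  qed
  hence "(\<Sum>a\<in>{..k}. 1/2 * pmf (binomial_pmf k p) a) = 1/2"
    by (simp add: sum_divide_distrib[symmetric])
  finally show ?thesis using assms by simp
qed

lemma exp_ge:
  assumes "m > 0" "0 < r2" "r2 < r1" "0 \<le> p" "p < 1"
  shows "measure_pmf.expectation (pair_pmf (binomial_pmf h p) (binomial_pmf l p))
          (\<lambda>(s1, s2). fr m r1 r2 (h - s1) (l - s2)) \<ge> 1/2"
proof -
  have "finite (set_pmf (pair_pmf (binomial_pmf h p) (binomial_pmf l p)))"
    using assms by (auto simp: set_pair_pmf set_pmf_binomial_eq)
  hence int: "integrable (measure_pmf (pair_pmf (binomial_pmf h p) (binomial_pmf l p)))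
          (\<lambda>(s1, s2). fr m r1 r2 (h - s1) (l - s2))"
    by (rule integrable_measure_pmf_finite)
  have "measure_pmf.expectation (pair_pmf (binomial_pmf h p) (binomial_pmf l p)) (\<lambda>_. (1/2::real)) \<le> measure_pmf.expectation (pair_pmf (binomial_pmf h p) (binomial_pmf l p)) (\<lambda>(s1, s2). fr m r1 r2 (h - s1) (l - s2))"
  proof (rule integral_mono)
    show "integrable (measure_pmf (pair_pmf (binomial_pmf h p) (binomial_pmf l p))) (\<lambda>_. (1/2::real))" by simp
    show "integrable (measure_pmf (pair_pmf (binomial_pmf h p) (binomial_pmf l p)))
          (\<lambda>(s1, s2). fr m r1 r2 (h - s1) (l - s2))" by (rule int)
    fix x show "1/2 \<le> (\<lambda>(s1, s2). fr m r1 r2 (h - s1) (l - s2)) x"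
      using assms fr_ge[OF assms(1-3)] by (simp split: prod.split)
  qed
  then show ?thesis by simp
qed

theorem theorem5:
  fixes m r1 r2 p C :: real
  assumes "m > 0"
    and "0 < r2" and "r2 < r1" and "r1 < 1"
    and "C > 0" and "0 \<le> p" and "p < 1" and "p \<le> C / sqrt m"
  shows "competitive_ratio m r1 r2 p (half_half_rew m r1 r2) = 1/2"
proof -
  define E where "E = (\<lambda>hl::nat\<times>nat. measure_pmf.expectation (pair_pmf (binomial_pmf (fst hl) p) (binomial_pmf (snd hl) p))
          (\<lambda>(s1, s2). fr m r1 r2 (fst hl - s1) (snd hl - s2)))"
  have cr: "competitive_ratio m r1 r2 p (half_half_rew m r1 r2) = (INF hl \<in> UNIV. E hl)"
    unfolding competitive_ratio_def E_def using assms(1)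
    by (simp add: inner_eq case_prod_beta)
  have ge: "\<And>hl. E hl \<ge> 1/2" unfolding E_def using assms by (intro exp_ge) auto
  have bdd: "bdd_below (range E)" using ge by (intro bdd_belowI2) 
  have lo: "(INF hl \<in> UNIV. E hl) \<ge> 1/2" using ge by (intro cINF_greatest) auto
  have up: "\<And>k. (INF hl \<in> UNIV. E hl) \<le> 1/2 + 1/2 * p ^ k"
  proof -
    fix k
    have "(INF hl \<in> UNIV. E hl) \<le> E (k, 0)" by (rule cINF_lower[OF bdd]) simp
    also have "\<dots> = 1/2 + 1/2 * p ^ k" unfolding E_def using exp_k assms by simp
    finally show "(INF hl \<in> UNIV. E hl) \<le> 1/2 + 1/2 * p ^ k" .
  qed
  have "(INF hl \<in> UNIV. E hl) \<le> 1/2"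
  proof (rule ccontr)
    assume "\<not> ?thesis"
    hence "2 * ((INF hl \<in> UNIV. E hl) - 1/2) > 0" by simp
    then obtain k where "p ^ k < 2 * ((INF hl \<in> UNIV. E hl) - 1/2)"
      using real_arch_pow_inv assms by blast
    with up[of k] show False by simp
  qed
  with lo cr show ?thesis by simp
qed

end
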